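(* For any $\xi\in(0,1)$ and $r\in(0,\pi/2)$ there exists $H=H(\xi,r)>0$ such that for all $\gamma\in B^\infty_{\rm ap}(\mathbb{R},\mathbb{R}^2)$ and all $f,g\in E_r(S^1)$: \begin{align*} \int_0^\pi\int_\alpha^\pi|p_{\alpha,\beta}(f)-p_{\alpha,\beta}(g)|\,d\beta\,d\alpha&\le H\|f-g\|_\infty^\xi,\\ |\omega_f(\gamma)-\omega_g(\gamma)|&\le H\|f-g\|_\infty^\xi,\\ \bigl|\|\omega_f\|_{\rm ir}-\|\omega_g\|_{\rm ir}\bigr|&\le H\|f-g\|_\infty^\xi,\\ \|\mu_{f,\gamma}-\mu_{g,\gamma}\|_\infty&\le H\|f-g\|_\infty^\xi. \end{align*}
   Context: $E(S^1)$ is the set of $1$-Lipschitz $f:\mathbb{R}\to\mathbb{R}$ (write $f_\alpha=f(\alpha)$) with $f_{\alpha+\pi}+f_\alpha=\pi$ for all $\alpha$, with the sup norm. $E_r(S^1)=\{f\in E(S^1):f_\alpha\in[r,\pi-r]\ \forall\alpha\}$. For $f\in E_r(S^1)$ and $\beta-\alpha\notin\pi\mathbb{Z}$, \[ p_{\alpha,\beta}(f)=\frac{1-\cos(\beta-\alpha)^2-\cos(f_\alpha)^2-\cos(f_\beta)^2+2\cos(\beta-\alpha)\cos(f_\alpha)\cos(f_\beta)}{\sin(\beta-\alpha)^2\sin(f_\alpha)^2\sin(f_\beta)^2}, \] and $q_{\alpha,\beta}(f)=\sin(f_\alpha)^2p_{\alpha,\beta}(f)$. For $v,w\in\mathbb{R}^2$,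 $v\times w=v_1w_2-v_2w_1$. $B^\infty_{\rm ap}(\mathbb{R},\mathbb{R}^2)$ is the set of measurable $\gamma:\mathbb{R}\to\mathbb{R}^2$ with $\gamma(\alpha+\pi)=-\gamma(\alpha)$ and $|\gamma(\alpha)|\le1$ a.e. Define \[ \omega_f(\gamma)=\int_0^\pi\int_\alpha^\pi p_{\alpha,\beta}(f)\,\gamma(\alpha)\times\gamma(\beta)\,d\beta\,d\alpha,\qquad \|\omega_f\|_{\rm ir}=\sup_{\gamma\in B^\infty_{\rm ap}(\mathbb{R},\mathbb{R}^2)}\omega_f(\gamma), \] and \[ \mu_{f,\gamma}(\alpha)=\int_\alpha^{\alpha+\pi}q_{\alpha,\beta}(f)\gamma(\beta)\,d\beta. \] *)

theory Defs
  imports "HOL-Analysis.Analysis"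
begin

definition E_S1 :: "(real \<Rightarrow> real) set" where
  "E_S1 = {f. (\<forall>x y. \<bar>f x - f y\<bar> \<le> \<bar>x - y\<bar>) \<and> (\<forall>a. f (a + pi) + f a = pi)}"

definition E_r :: "real \<Rightarrow> (real \<Rightarrow> real) set" where
  "E_r r = {f \<in> E_S1. \<forall>a. r \<le> f a \<and> f a \<le> pi - r}"

definition sup_dist :: "(real \<Rightarrow> real) \<Rightarrow> (real \<Rightarrow> real) \<Rightarrow> real" where
  "sup_dist f g = (SUP x. \<bar>f x - g x\<bar>)"

definition p_ab :: "(real \<Rightarrow> real) \<Rightarrow> real \<Rightarrow> real \<Rightarrow> real" where
  "p_ab f a b =
     (1 - (cos (b - a))\<^sup>2 - (cos (f a))\<^sup>2 - (cos (f b))\<^sup>2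
        + 2 * cos (b - a) * cos (f a) * cos (f b))
     / ((sin (b - a))\<^sup>2 * (sin (f a))\<^sup>2 * (sin (f b))\<^sup>2)"

definition q_ab :: "(real \<Rightarrow> real) \<Rightarrow> real \<Rightarrow> real \<Rightarrow> real" where
  "q_ab f a b = (sin (f a))\<^sup>2 * p_ab f a b"

definition cross2 :: "real \<times> real \<Rightarrow> real \<times> real \<Rightarrow> real" where
  "cross2 v w = fst v * snd w - snd v * fst w"

definition B_ap :: "(real \<Rightarrow> real \<times> real) set" where
  "B_ap = {\<gamma>. \<gamma> \<in> borel_measurable lebesgue \<and> (\<forall>a. \<gamma> (a + pi) = - \<gamma> a)
              \<and> (AE x in lebesgue. norm (\<gamma> x) \<le> 1)}"

definition omega :: "(real \<Rightarrow> real) \<Rightarrow> (real \<Rightarrow> real \<times> real) \<Rightarrow> real" where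
  "omega f \<gamma> = (LINT a:{0..pi}|lebesgue. (LINT b:{a..pi}|lebesgue. p_ab f a b * cross2 (\<gamma> a) (\<gamma> b)))"

definition omega_ir :: "(real \<Rightarrow> real) \<Rightarrow> real" where
  "omega_ir f = (SUP \<gamma>\<in>B_ap. omega f \<gamma>)"

definition mu :: "(real \<Rightarrow> real) \<Rightarrow> (real \<Rightarrow> real \<times> real) \<Rightarrow> real \<Rightarrow> real \<times> real" where
  "mu f \<gamma> a = (LINT b:{a..a+pi}|lebesgue. q_ab f a b *\<^sub>R \<gamma> b)"

end

theory Submission
  imports Defs
begin

lemma sin_ge_half: assumes "0 \<le> x" "x \<le> pi/2" shows "x/2 \<le> sin x"
proof (cases "x \<le> pi/3")
  case True
  have "(\<lambda>y. y/2 - sin y) x \<le> (\<lambda>y. y/2 - sin y) 0"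
  proof (rule deriv_nonpos_imp_antimono[where g = "\<lambda>y. y/2 - sin y" and g' = "\<lambda>y. 1/2 - cos y"])
    fix y assume y: "y \<in> {0..x}"
    show "((\<lambda>y. y/2 - sin y) has_real_derivative 1/2 - cos y) (at y)"
      by (auto intro!: derivative_eq_intros)
    have "cos (pi/3) \<le> cos y" using y True by (intro cos_monotone_0_pi_le) auto
    then show "1/2 - cos y \<le> 0" by (simp add: cos_60)
  qed (use assms in auto)
  then show ?thesis by simp
next
  case False
  have "sin (pi/3) \<le> sin x" using False assms by (intro sin_monotone_2pi_le) auto
  moreover have "x/2 \<le> sqrt 3 / 2"
  proof -
    have "x \<le> 1.6" using assms pi_less_4 pi_approx by auto
    moreover have "1.6 \<le> sqrt 3" by (rule real_le_rsqrt) (simp add: power2_eq_square)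
    ultimately show ?thesis by simp
  qed
  ultimately show ?thesis by (simp add: sin_60)
qed

lemma sin_lower: assumes "0 \<le> t" "t \<le> pi" shows "t*(pi-t)/(2*pi) \<le> sin t"
proof (cases "t \<le> pi/2")
  case True
  have "t*(pi-t) \<le> t*pi" using assms by (intro mult_left_mono) auto
  hence "t*(pi-t)/(2*pi) \<le> t*pi/(2*pi)" by (intro divide_right_mono) auto
  hence "t*(pi-t)/(2*pi) \<le> t/2" by simp
  with sin_ge_half[of t] True assms show ?thesis by linarith
next
  case False
  have "t*(pi-t) \<le> pi*(pi-t)" using assms by (intro mult_right_mono) auto
  hence "t*(pi-t)/(2*pi) \<le> pi*(pi-t)/(2*pi)" by (intro divide_right_mono) auto
  hence "t*(pi-t)/(2*pi) \<le> (pi-t)/2" by simp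
  moreover have "(pi - t)/2 \<le> sin (pi - t)" using False assms by (intro sin_ge_half) auto
  moreover have "sin (pi - t) = sin t" by simp
  ultimately show ?thesis by linarith
qed

lemma one_minus_cos: "1 - cos t \<le> (t::real)\<^sup>2/2"
proof -
  have "cos t = 1 - 2 * sin (t/2) ^ 2" using cos_double_sin[of "t/2"] by simp
  moreover have "\<bar>sin (t/2)\<bar> \<le> \<bar>t/2\<bar>" by (rule abs_sin_x_le_abs_x)
  hence "sin (t/2) ^ 2 \<le> (t/2)^2" by (metis power2_abs power_mono abs_ge_zero)
  ultimately show ?thesis by (simp add: power_divide)
qed

lemma X_bounds: assumes "\<bar>D\<bar> \<le> t" "t \<le> pi"
  shows "0 \<le> cos D - cos t" "cos D - cos t \<le> t\<^sup>2/2"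
proof -
  have "cos t \<le> cos \<bar>D\<bar>" using assms by (intro cos_monotone_0_pi_le) auto
  then show "0 \<le> cos D - cos t" by simp
  show "cos D - cos t \<le> t\<^sup>2/2" using one_minus_cos[of t] cos_le_one[of D] by linarith
qed

lemma cos_lip: fixes u v t :: real assumes "\<bar>u\<bar> \<le> t" "\<bar>v\<bar> \<le> t"
  shows "\<bar>cos u - cos v\<bar> \<le> t * \<bar>u - v\<bar>"
proof -
  have "\<bar>cos u - cos v\<bar> = 2 * \<bar>sin ((u+v)/2)\<bar> * \<bar>sin ((v-u)/2)\<bar>"
    by (simp add: cos_diff_cos abs_mult)
  also have "\<dots> \<le> 2 * \<bar>(u+v)/2\<bar> * \<bar>(v-u)/2\<bar>"
    by (intro mult_mono mult_left_mono abs_sin_x_le_abs_x) auto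
  also have "\<dots> = \<bar>u+v\<bar> * \<bar>u - v\<bar> / 2" by (simp add: abs_minus_commute)
  also have "\<dots> \<le> (2*t) * \<bar>u - v\<bar> / 2"
    using assms by (intro divide_right_mono mult_right_mono) auto
  finally show ?thesis by simp
qed

definition NN :: "real \<Rightarrow> real \<Rightarrow> real \<Rightarrow> real" where
  "NN A B t = 1 - (cos t)\<^sup>2 - (cos A)\<^sup>2 - (cos B)\<^sup>2 + 2 * cos t * cos A * cos B"

lemma alg_id: fixes sa sb ca cb c :: real
  assumes "sa^2 = 1 - ca^2" "sb^2 = 1 - cb^2"
  shows "(ca * cb + sa * sb - c) * (sa * sb - ca * cb + c) = 1 - c^2 - ca^2 - cb^2 + 2*c*ca * cb"
  using assms by algebra

lemma NN_factor: "NN A B t = (cos (A - B) - cos t) * (cos (pi - A - B) - cos (pi - t))"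
proof -
  have "cos (pi - A - B) = sin A * sin B - cos A * cos B"
    using cos_pi_minus[of "A+B"] by (simp add: cos_add diff_diff_eq)
  moreover have "cos (pi - t) = - cos t" by simp
  ultimately show ?thesis unfolding NN_def cos_diff
    using alg_id[of "sin A" "cos A" "sin B" "cos B" "cos t"] sin_squared_eq[of A] sin_squared_eq[of B]
    by simp
qed


lemma NN_bounds:
  fixes A1 B1 A2 B2 t d :: real
  assumes t: "0 < t" "t < pi" and h1: "\<bar>A1 - B1\<bar> \<le> t" "\<bar>pi - A1 - B1\<bar> \<le> pi - t"
    and h2: "\<bar>A2 - B2\<bar> \<le> t" "\<bar>pi - A2 - B2\<bar> \<le> pi - t"
    and d: "\<bar>A1 - A2\<bar> \<le> d" "\<bar>B1 - B2\<bar> \<le> d"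
  shows "\<bar>NN A1 B1 t\<bar> \<le> (t*(pi-t))\<^sup>2/4" "\<bar>NN A1 B1 t - NN A2 B2 t\<bar> \<le> pi*d*(t*(pi-t))"
proof -
  define X1 where "X1 = cos (A1 - B1) - cos t"
  define X2 where "X2 = cos (A2 - B2) - cos t"
  define Y1 where "Y1 = cos (pi - A1 - B1) - cos (pi - t)"
  define Y2 where "Y2 = cos (pi - A2 - B2) - cos (pi - t)"
  have N1: "NN A1 B1 t = X1 * Y1" and N2: "NN A2 B2 t = X2 * Y2"
    unfolding X1_def Y1_def X2_def Y2_def by (rule NN_factor)+
  have X1b: "0 \<le> X1" "X1 \<le> t\<^sup>2/2" unfolding X1_def using X_bounds[OF h1(1)] t by auto
  have X2b: "0 \<le> X2" "X2 \<le> t\<^sup>2/2" unfolding X2_def using X_bounds[OF h2(1)] t by auto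
  have Y1b: "0 \<le> Y1" "Y1 \<le> (pi-t)\<^sup>2/2" unfolding Y1_def using X_bounds[OF h1(2)] t by auto
  have Y2b: "0 \<le> Y2" "Y2 \<le> (pi-t)\<^sup>2/2" unfolding Y2_def using X_bounds[OF h2(2)] t by auto
  have "\<bar>X1 * Y1\<bar> \<le> (t\<^sup>2/2) * ((pi-t)\<^sup>2/2)"
  proof -
    have "X1 * Y1 \<le> (t\<^sup>2/2) * ((pi-t)\<^sup>2/2)" using X1b Y1b by (intro mult_mono) auto
    thus ?thesis using X1b Y1b by simp
  qed
  also have "\<dots> = (t*(pi-t))\<^sup>2/4" by (simp add: power_mult_distrib)
  finally show "\<bar>NN A1 B1 t\<bar> \<le> (t*(pi-t))\<^sup>2/4" using N1 by simp
  have dX: "\<bar>X1 - X2\<bar> \<le> t * (2*d)"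
  proof -
    have "\<bar>X1 - X2\<bar> = \<bar>cos (A1 - B1) - cos (A2 - B2)\<bar>" unfolding X1_def X2_def by simp
    also have "\<dots> \<le> t * \<bar>(A1 - B1) - (A2 - B2)\<bar>" using h1 h2 by (intro cos_lip) auto
    also have "\<dots> \<le> t * (2*d)" using d t by (intro mult_left_mono) auto
    finally show ?thesis .
  qed
  have dY: "\<bar>Y1 - Y2\<bar> \<le> (pi - t) * (2*d)"
  proof -
    have "\<bar>Y1 - Y2\<bar> = \<bar>cos (pi - A1 - B1) - cos (pi - A2 - B2)\<bar>" unfolding Y1_def Y2_def by simp
    also have "\<dots> \<le> (pi - t) * \<bar>(pi - A1 - B1) - (pi - A2 - B2)\<bar>" using h1 h2 by (intro cos_lip) auto
    also have "\<dots> \<le> (pi - t) * (2*d)" using d t by (intro mult_left_mono) auto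
    finally show ?thesis .
  qed
  have "\<bar>X1 * Y1 - X2 * Y2\<bar> = \<bar>(X1 - X2) * Y1 + X2 * (Y1 - Y2)\<bar>" by (simp add: algebra_simps)
  also have "\<dots> \<le> \<bar>X1 - X2\<bar> * Y1 + X2 * \<bar>Y1 - Y2\<bar>"
    using abs_triangle_ineq[of "(X1 - X2) * Y1" "X2 * (Y1 - Y2)"] X2b Y1b by (simp add: abs_mult)
  also have "\<dots> \<le> (t * (2*d)) * ((pi-t)\<^sup>2/2) + (t\<^sup>2/2) * ((pi - t) * (2*d))"
    using dX dY X2b Y1b t abs_ge_zero[of "A1 - A2"] d(1) by (intro add_mono mult_mono) auto
  also have "\<dots> = pi*d*(t*(pi-t))" by (simp add: power2_eq_square field_simps)
  finally show "\<bar>NN A1 B1 t - NN A2 B2 t\<bar> \<le> pi*d*(t*(pi-t))" using N1 N2 by simp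
qed


lemma div_core:
  fixes N1 N2 V1 V2 s m d v0 :: real
  assumes m: "0 < m" "m \<le> pi\<^sup>2" and s: "m/(2*pi) \<le> s"
    and N: "\<bar>N1\<bar> \<le> m\<^sup>2/4" "\<bar>N2\<bar> \<le> m\<^sup>2/4" "\<bar>N1 - N2\<bar> \<le> pi*d*m"
    and V: "0 < v0" "v0 \<le> V1" "v0 \<le> V2" "V1 \<le> 1" "V2 \<le> 1" "\<bar>V1 - V2\<bar> \<le> 4*d"
    and d: "0 \<le> d"
  shows "\<bar>N1/(s\<^sup>2*V1)\<bar> \<le> pi\<^sup>2/v0"
    and "\<bar>N1/(s\<^sup>2*V1) - N2/(s\<^sup>2*V2)\<bar> * m \<le> 4*pi\<^sup>2*(pi\<^sup>2+pi)/v0\<^sup>2 * d"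
proof -
  have s0: "0 < m/(2*pi)" using m by simp
  have ss: "(m/(2*pi))\<^sup>2 \<le> s\<^sup>2" using s s0 by (intro power_mono) auto
  have sp: "0 < s" using s s0 by linarith
  have den1: "(m/(2*pi))\<^sup>2 * v0 \<le> s\<^sup>2 * V1" using ss V by (intro mult_mono) auto
  have dpos: "0 < (m/(2*pi))\<^sup>2 * v0" using s0 V by (intro mult_pos_pos) auto
  have sV1: "0 < s\<^sup>2*V1" using sp V(1,2) by (intro mult_pos_pos) auto
  have "\<bar>N1/(s\<^sup>2*V1)\<bar> = \<bar>N1\<bar>/(s\<^sup>2*V1)" using sV1 by (metis abs_div_pos)
  also have "\<dots> \<le> (m\<^sup>2/4)/((m/(2*pi))\<^sup>2 * v0)"
    using N(1) den1 dpos by (intro frac_le) auto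
  also have "\<dots> = pi\<^sup>2/v0" using m(1) V(1) by (simp add: power2_eq_square field_simps)
  finally show "\<bar>N1/(s\<^sup>2*V1)\<bar> \<le> pi\<^sup>2/v0" .
  have V1p: "0 < V1" "0 < V2" using V by auto
  have eq: "N1/(s\<^sup>2*V1) - N2/(s\<^sup>2*V2) = (N1*V2 - N2*V1)/(s\<^sup>2*V1*V2)"
    using sp V1p by (simp add: divide_simps)
  have "\<bar>N1*V2 - N2*V1\<bar> = \<bar>N1*(V2 - V1) + V1*(N1 - N2)\<bar>" by (simp add: algebra_simps)
  also have "\<dots> \<le> \<bar>N1\<bar>*\<bar>V2 - V1\<bar> + V1*\<bar>N1 - N2\<bar>"
    using abs_triangle_ineq[of "N1*(V2-V1)" "V1*(N1-N2)"] V1p by (simp add: abs_mult)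
  also have "\<dots> \<le> (m\<^sup>2/4)*(4*d) + 1*(pi*d*m)"
    using N V V1p d by (intro add_mono mult_mono) (auto simp: abs_minus_commute)
  also have "\<dots> \<le> (pi\<^sup>2+pi)*d*m"
  proof -
    have "m\<^sup>2 * d \<le> pi\<^sup>2 * m * d" using m d unfolding power2_eq_square
      by (intro mult_right_mono) auto
    thus ?thesis by (simp add: algebra_simps)
  qed
  finally have num: "\<bar>N1*V2 - N2*V1\<bar> \<le> (pi\<^sup>2+pi)*d*m" .
  have den2: "(m/(2*pi))\<^sup>2 * v0\<^sup>2 \<le> s\<^sup>2*V1*V2"
  proof -
    have "v0\<^sup>2 \<le> V1*V2" using V unfolding power2_eq_square by (intro mult_mono) auto
    hence "(m/(2*pi))\<^sup>2 * v0\<^sup>2 \<le> s\<^sup>2*(V1*V2)" using ss V by (intro mult_mono) auto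
    thus ?thesis by (simp add: mult.assoc)
  qed
  have dpos2: "0 < (m/(2*pi))\<^sup>2 * v0\<^sup>2" using s0 V by (intro mult_pos_pos) auto
  have "\<bar>N1/(s\<^sup>2*V1) - N2/(s\<^sup>2*V2)\<bar> = \<bar>N1*V2 - N2*V1\<bar>/(s\<^sup>2*V1*V2)"
    unfolding eq proof -
    have "0 < s\<^sup>2*V1*V2" using sp V1p by (intro mult_pos_pos) auto
    thus "\<bar>(N1*V2 - N2*V1)/(s\<^sup>2*V1*V2)\<bar> = \<bar>N1*V2 - N2*V1\<bar>/(s\<^sup>2*V1*V2)" by (metis abs_div_pos)
  qed
  also have "\<dots> \<le> ((pi\<^sup>2+pi)*d*m)/((m/(2*pi))\<^sup>2 * v0\<^sup>2)"
    using num den2 dpos2 d m by (intro frac_le) auto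
  finally have "\<bar>N1/(s\<^sup>2*V1) - N2/(s\<^sup>2*V2)\<bar> * m \<le> ((pi\<^sup>2+pi)*d*m)/((m/(2*pi))\<^sup>2 * v0\<^sup>2) * m"
    using m by (intro mult_right_mono) auto
  also have "\<dots> = 4*pi\<^sup>2*(pi\<^sup>2+pi)/v0\<^sup>2 * d" using m(1) V(1) by (simp add: power2_eq_square field_simps)
  finally show "\<bar>N1/(s\<^sup>2*V1) - N2/(s\<^sup>2*V2)\<bar> * m \<le> 4*pi\<^sup>2*(pi\<^sup>2+pi)/v0\<^sup>2 * d" .
qed

lemma holder_comb:
  fixes x C1 C2 d m \<xi> :: real
  assumes "0 \<le> x" "x \<le> C1" "x*m \<le> C2*d" "0 < m" "0 \<le> d" "0 \<le> C2" "0 < \<xi>" "\<xi> < 1"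
  shows "x \<le> C1 powr (1-\<xi>) * C2 powr \<xi> * d powr \<xi> * m powr (-\<xi>)"
proof (cases "x = 0")
  case True then show ?thesis by simp
next
  case False
  hence xp: "0 < x" using assms by simp
  have "x = x powr (1-\<xi>) * x powr \<xi>" using xp by (simp add: powr_add[symmetric])
  also have "x powr \<xi> = (x*m) powr \<xi> * m powr (-\<xi>)"
    using xp assms by (simp add: powr_mult powr_minus field_simps)
  also have "x powr (1-\<xi>) \<le> C1 powr (1-\<xi>)" using assms xp by (intro powr_mono2) auto
  also have "(x*m) powr \<xi> \<le> (C2*d) powr \<xi>" using assms xp by (intro powr_mono2) auto
  also have "(C2*d) powr \<xi> = C2 powr \<xi> * d powr \<xi>" using assms by (simp add: powr_mult)
  finally show ?thesis using assms xp by (simp add: mult.assoc mult_left_mono mult_right_mono)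
qed

lemma m_powr_le:
  fixes t \<xi> :: real
  assumes "0 < t" "t < pi" "0 < \<xi>"
  shows "(t*(pi-t)) powr (-\<xi>) \<le> t powr (-\<xi>) + (pi-t) powr (-\<xi>)"
proof (cases "t \<le> pi/2")
  case True
  have "t \<le> t*(pi-t)" using True assms pi_gt3 by (simp add: mult_le_cancel_left1)
  hence "(t*(pi-t)) powr (-\<xi>) \<le> t powr (-\<xi>)" using assms by (intro powr_mono2') auto
  moreover have "0 \<le> (pi-t) powr (-\<xi>)" "0 \<le> t powr (-\<xi>)" by simp_all
  ultimately show ?thesis by linarith
next
  case False
  have "pi - t \<le> t*(pi-t)" using False assms pi_gt3 by (simp add: mult_le_cancel_right1)
  hence "(t*(pi-t)) powr (-\<xi>) \<le> (pi-t) powr (-\<xi>)" using assms by (intro powr_mono2') auto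
  moreover have "0 \<le> (pi-t) powr (-\<xi>)" "0 \<le> t powr (-\<xi>)" by simp_all
  ultimately show ?thesis by linarith
qed


lemma Er_props:
  assumes "f \<in> E_r r"
  shows "\<And>x y. \<bar>f x - f y\<bar> \<le> \<bar>x - y\<bar>" "\<And>x. f (x + pi) + f x = pi" "\<And>x. r \<le> f x" "\<And>x. f x \<le> pi - r"
  using assms unfolding E_r_def E_S1_def by auto

lemma Er_cont: assumes "f \<in> E_r r" shows "continuous_on UNIV f"
proof -
  have "lipschitz_on 1 UNIV f" using Er_props(1)[OF assms]
    by (intro lipschitz_onI) (auto simp: dist_real_def)
  thus ?thesis by (rule lipschitz_on_continuous_on)
qed

lemma sup_dist_ge:
  assumes "f \<in> E_r r" "g \<in> E_r r"
  shows "\<bar>f x - g x\<bar> \<le> sup_dist f g"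
proof -
  have "\<bar>f y - g y\<bar> \<le> pi - 2*r" for y
  proof -
    have "r \<le> f y" "f y \<le> pi - r" "r \<le> g y" "g y \<le> pi - r"
      using Er_props(3,4)[OF assms(1)] Er_props(3,4)[OF assms(2)] by auto
    thus ?thesis by (simp add: abs_le_iff)
  qed
  hence "bdd_above (range (\<lambda>x. \<bar>f x - g x\<bar>))" by (intro bdd_aboveI2) 
  thus ?thesis unfolding sup_dist_def by (intro cSUP_upper) auto
qed

lemma sin_ge_sin_r:
  assumes "0 < r" "r < pi/2" "r \<le> x" "x \<le> pi - r"
  shows "sin r \<le> sin x"
proof (cases "x \<le> pi/2")
  case True then show ?thesis using assms by (intro sin_monotone_2pi_le) auto
next
  case False
  have "sin r \<le> sin (pi - x)" using False assms by (intro sin_monotone_2pi_le) auto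
  then show ?thesis by simp
qed

lemma sin_sq_lip: "\<bar>(sin (x::real))\<^sup>2 - (sin y)\<^sup>2\<bar> \<le> 2 * \<bar>x - y\<bar>"
proof -
  have "\<bar>sin x - sin y\<bar> = 2 * \<bar>sin ((x - y)/2)\<bar> * \<bar>cos ((x + y)/2)\<bar>"
    by (simp add: sin_diff_sin abs_mult)
  also have "\<dots> \<le> 2 * \<bar>(x - y)/2\<bar> * 1"
    by (intro mult_mono mult_left_mono abs_sin_x_le_abs_x) (auto simp: abs_cos_le_one)
  finally have h: "\<bar>sin x - sin y\<bar> \<le> \<bar>x - y\<bar>" by simp
  have "\<bar>(sin x)\<^sup>2 - (sin y)\<^sup>2\<bar> = \<bar>sin x - sin y\<bar> * \<bar>sin x + sin y\<bar>"
    by (simp add: power2_eq_square abs_mult[symmetric] algebra_simps)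
  also have "\<dots> \<le> \<bar>x - y\<bar> * 2"
  proof -
    have h2: "\<bar>sin x + sin y\<bar> \<le> 2"
      using abs_triangle_ineq[of "sin x" "sin y"] abs_sin_le_one[of x] abs_sin_le_one[of y] by linarith
    show ?thesis using h h2 by (intro mult_mono) auto
  qed
  finally show ?thesis by simp
qed


definition v0r :: "real \<Rightarrow> real" where "v0r r = sin r ^ 4"
definition C1r :: "real \<Rightarrow> real" where "C1r r = pi\<^sup>2 / v0r r"
definition Kc :: "real \<Rightarrow> real \<Rightarrow> real" where
  "Kc \<xi> r = (2 * C1r r) powr (1 - \<xi>) * (4*pi\<^sup>2*(pi\<^sup>2+pi)/(v0r r)\<^sup>2) powr \<xi>"
definition Wf :: "real \<Rightarrow> real \<Rightarrow> real" where
  "Wf \<xi> t = (if 0 < t \<and> t < pi then t powr (-\<xi>) + (pi - t) powr (-\<xi>) else 0)"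

lemma Wf_nonneg: "0 \<le> Wf \<xi> t" unfolding Wf_def by auto

lemma generic_pw:
  fixes A1 B1 A2 B2 V1 V2 t d \<xi> r :: real
  assumes r: "0 < r" "r < pi/2" and xi: "0 < \<xi>" "\<xi> < 1"
    and t: "0 < t" "t < pi" and h1: "\<bar>A1 - B1\<bar> \<le> t" "\<bar>pi - A1 - B1\<bar> \<le> pi - t"
    and h2: "\<bar>A2 - B2\<bar> \<le> t" "\<bar>pi - A2 - B2\<bar> \<le> pi - t"
    and d: "\<bar>A1 - A2\<bar> \<le> d" "\<bar>B1 - B2\<bar> \<le> d"
    and V: "v0r r \<le> V1" "v0r r \<le> V2" "V1 \<le> 1" "V2 \<le> 1" "\<bar>V1 - V2\<bar> \<le> 4*d"
  shows "\<bar>NN A1 B1 t / ((sin t)\<^sup>2 * V1)\<bar> \<le> C1r r"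
    and "\<bar>NN A1 B1 t / ((sin t)\<^sup>2 * V1) - NN A2 B2 t / ((sin t)\<^sup>2 * V2)\<bar> \<le> Kc \<xi> r * d powr \<xi> * Wf \<xi> t"
proof -
  define m where "m = t*(pi-t)"
  have m0: "0 < m" using t by (simp add: m_def)
  have mle: "m \<le> pi\<^sup>2" unfolding m_def power2_eq_square using t by (intro mult_mono) auto
  have s: "m/(2*pi) \<le> sin t" unfolding m_def using sin_lower[of t] t by auto
  have "0 < sin r" using r by (intro sin_gt_zero) auto
  hence v0: "0 < v0r r" unfolding v0r_def by simp
  have d0: "0 \<le> d" using d(1) by linarith
  have Nb: "\<bar>NN A1 B1 t\<bar> \<le> m\<^sup>2/4" "\<bar>NN A1 B1 t - NN A2 B2 t\<bar> \<le> pi*d*m"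
    unfolding m_def using NN_bounds[OF t h1 h2 d] by auto
  have Nb2: "\<bar>NN A2 B2 t\<bar> \<le> m\<^sup>2/4"
    unfolding m_def using NN_bounds[OF t h2 h1] d by (auto simp: abs_minus_commute)
  note dc = div_core[OF m0 mle s Nb(1) Nb2 Nb(2) v0 V d0]
  note dc2 = div_core[OF m0 mle s Nb2 Nb(1) _ v0 V(2,1,4,3) _ d0]
  show b1: "\<bar>NN A1 B1 t / ((sin t)\<^sup>2 * V1)\<bar> \<le> C1r r" using dc(1) by (simp add: C1r_def)
  have b2: "\<bar>NN A2 B2 t / ((sin t)\<^sup>2 * V2)\<bar> \<le> C1r r"
    using dc2(1) Nb(2) V(5) by (simp add: C1r_def abs_minus_commute)
  define x where "x = \<bar>NN A1 B1 t / ((sin t)\<^sup>2 * V1) - NN A2 B2 t / ((sin t)\<^sup>2 * V2)\<bar>"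
  have x1: "x \<le> 2 * C1r r" 
  proof -
    have gen: "\<And>a b c::real. \<bar>a\<bar> \<le> c \<Longrightarrow> \<bar>b\<bar> \<le> c \<Longrightarrow> \<bar>a - b\<bar> \<le> 2*c" by linarith
    show ?thesis unfolding x_def by (rule gen[OF b1 b2])
  qed
  have x2: "x * m \<le> (4*pi\<^sup>2*(pi\<^sup>2+pi)/(v0r r)\<^sup>2) * d" unfolding x_def using dc(2) by simp
  have "x \<le> (2 * C1r r) powr (1-\<xi>) * (4*pi\<^sup>2*(pi\<^sup>2+pi)/(v0r r)\<^sup>2) powr \<xi> * d powr \<xi> * m powr (-\<xi>)"
    by (rule holder_comb[OF _ x1 x2 m0 d0 _ xi]) (use v0 in \<open>auto simp: x_def\<close>)
  also have "\<dots> = Kc \<xi> r * d powr \<xi> * m powr (-\<xi>)" by (simp add: Kc_def)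
  also have "\<dots> \<le> Kc \<xi> r * d powr \<xi> * Wf \<xi> t"
  proof (rule mult_left_mono)
    show "m powr (-\<xi>) \<le> Wf \<xi> t" unfolding m_def Wf_def using m_powr_le[OF t xi(1)] t by simp
    show "0 \<le> Kc \<xi> r * d powr \<xi>" by (simp add: Kc_def)
  qed
  finally show "\<bar>NN A1 B1 t / ((sin t)\<^sup>2 * V1) - NN A2 B2 t / ((sin t)\<^sup>2 * V2)\<bar> \<le> Kc \<xi> r * d powr \<xi> * Wf \<xi> t"
    unfolding x_def .
qed


lemma V_lip: fixes a b a' b' d :: real
  assumes "\<bar>a - a'\<bar> \<le> d" "\<bar>b - b'\<bar> \<le> d"
  shows "\<bar>(sin a)\<^sup>2 * (sin b)\<^sup>2 - (sin a')\<^sup>2 * (sin b')\<^sup>2\<bar> \<le> 4*d"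
proof -
  have e: "(sin a)\<^sup>2 * (sin b)\<^sup>2 - (sin a')\<^sup>2 * (sin b')\<^sup>2
     = ((sin a)\<^sup>2 - (sin a')\<^sup>2) * (sin b)\<^sup>2 + (sin a')\<^sup>2 * ((sin b)\<^sup>2 - (sin b')\<^sup>2)"
    by (simp add: algebra_simps)
  have sb: "(sin b)\<^sup>2 \<le> 1" "(sin a')\<^sup>2 \<le> 1" by (simp_all add: abs_square_le_1)
  have l1: "\<bar>((sin a)\<^sup>2 - (sin a')\<^sup>2) * (sin b)\<^sup>2\<bar> \<le> 2*d"
  proof -
    have "\<bar>((sin a)\<^sup>2 - (sin a')\<^sup>2) * (sin b)\<^sup>2\<bar> = \<bar>(sin a)\<^sup>2 - (sin a')\<^sup>2\<bar> * (sin b)\<^sup>2"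
      by (simp add: abs_mult)
    also have "\<dots> \<le> (2*\<bar>a - a'\<bar>) * 1" using sin_sq_lip[of a a'] sb by (intro mult_mono) auto
    finally show ?thesis using assms by simp
  qed
  have l2: "\<bar>(sin a')\<^sup>2 * ((sin b)\<^sup>2 - (sin b')\<^sup>2)\<bar> \<le> 2*d"
  proof -
    have "\<bar>(sin a')\<^sup>2 * ((sin b)\<^sup>2 - (sin b')\<^sup>2)\<bar> = (sin a')\<^sup>2 * \<bar>(sin b)\<^sup>2 - (sin b')\<^sup>2\<bar>"
      by (simp add: abs_mult)
    also have "\<dots> \<le> 1 * (2*\<bar>b - b'\<bar>)" using sin_sq_lip[of b b'] sb by (intro mult_mono) auto
    finally show ?thesis using assms by simp
  qed
  show ?thesis unfolding e using l1 l2 abs_triangle_ineq by (smt (verit))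
qed

lemma pw_fg:
  assumes r: "0 < r" "r < pi/2" and xi: "0 < \<xi>" "\<xi> < 1"
    and fg: "f \<in> E_r r" "g \<in> E_r r" and ab: "a \<le> b" "b \<le> a + pi"
  shows "\<bar>p_ab f a b\<bar> \<le> C1r r" "\<bar>q_ab f a b\<bar> \<le> C1r r"
    "\<bar>p_ab f a b - p_ab g a b\<bar> \<le> Kc \<xi> r * sup_dist f g powr \<xi> * Wf \<xi> (b - a)"
    "\<bar>q_ab f a b - q_ab g a b\<bar> \<le> Kc \<xi> r * sup_dist f g powr \<xi> * Wf \<xi> (b - a)"
proof -
  have "0 < sin r" using r by (intro sin_gt_zero) auto
  hence C0: "0 \<le> C1r r" unfolding C1r_def v0r_def by simp
  have K0: "0 \<le> Kc \<xi> r * sup_dist f g powr \<xi> * Wf \<xi> (b - a)"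
    by (intro mult_nonneg_nonneg Wf_nonneg) (simp_all add: Kc_def)
  have "(b - a = 0 \<or> b - a = pi) \<or> (0 < b - a \<and> b - a < pi)" using ab by linarith
  moreover
  { assume "b - a = 0 \<or> b - a = pi"
    hence "sin (b - a) = 0" by auto
    hence "p_ab h a b = 0" "q_ab h a b = 0" for h unfolding p_ab_def q_ab_def by simp_all
    hence "\<bar>p_ab f a b\<bar> \<le> C1r r \<and> \<bar>q_ab f a b\<bar> \<le> C1r r \<and>
      \<bar>p_ab f a b - p_ab g a b\<bar> \<le> Kc \<xi> r * sup_dist f g powr \<xi> * Wf \<xi> (b - a) \<and>
      \<bar>q_ab f a b - q_ab g a b\<bar> \<le> Kc \<xi> r * sup_dist f g powr \<xi> * Wf \<xi> (b - a)"
      using C0 K0 by simp }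
  moreover
  { assume t: "0 < b - a" "b - a < pi"
    define t where "t = b - a"
    define d where "d = sup_dist f g"
    have t': "0 < t" "t < pi" using t by (auto simp: t_def)
    have geo: "\<bar>h a - h b\<bar> \<le> t" "\<bar>pi - h a - h b\<bar> \<le> pi - t" if h: "h \<in> E_r r" for h
    proof -
      show "\<bar>h a - h b\<bar> \<le> t" using Er_props(1)[OF h, of a b] ab by (simp add: t_def)
      have "h (b - pi + pi) + h (b - pi) = pi" by (rule Er_props(2)[OF h])
      hence "pi - h a - h b = h (b - pi) - h a" by simp
      also have "\<bar>\<dots>\<bar> \<le> \<bar>(b - pi) - a\<bar>" by (rule Er_props(1)[OF h])
      finally show "\<bar>pi - h a - h b\<bar> \<le> pi - t" using t by (simp add: t_def)
    qed
    have dd: "\<bar>f a - g a\<bar> \<le> d" "\<bar>f b - g b\<bar> \<le> d" unfolding d_def using sup_dist_ge[OF fg] by auto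
    have sr: "sin r \<le> sin (h x)" if h: "h \<in> E_r r" for h x
      using sin_ge_sin_r[OF r Er_props(3,4)[OF h]] by blast
    have sr2: "(sin r)\<^sup>2 \<le> (sin (h x))\<^sup>2" if h: "h \<in> E_r r" for h x
      using sr[OF h, of x] \<open>0 < sin r\<close> by (intro power_mono) auto
    have sr1: "(sin r)\<^sup>2 \<le> 1" by (simp add: abs_square_le_1)
    have v4: "v0r r \<le> (sin r)\<^sup>2" unfolding v0r_def
    proof -
      have "sin r ^ 4 = (sin r)\<^sup>2 * (sin r)\<^sup>2" by (simp add: power2_eq_square power4_eq_xxxx)
      also have "\<dots> \<le> (sin r)\<^sup>2 * 1" using sr1 by (intro mult_left_mono) auto
      finally show "sin r ^ 4 \<le> (sin r)\<^sup>2" by simp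
    qed
    have Vp: "v0r r \<le> (sin (h a))\<^sup>2 * (sin (h b))\<^sup>2" if h: "h \<in> E_r r" for h
    proof -
      have "v0r r = (sin r)\<^sup>2 * (sin r)\<^sup>2" unfolding v0r_def by (simp add: power2_eq_square power4_eq_xxxx)
      also have "\<dots> \<le> (sin (h a))\<^sup>2 * (sin (h b))\<^sup>2" using sr2[OF h] by (intro mult_mono) auto
      finally show ?thesis .
    qed
    have Vq: "v0r r \<le> (sin (h b))\<^sup>2" if h: "h \<in> E_r r" for h using v4 sr2[OF h, of b] by linarith
    have V1a: "(sin x)\<^sup>2 \<le> 1" for x :: real by (simp add: abs_square_le_1)
    have V1: "(sin x)\<^sup>2 * (sin y)\<^sup>2 \<le> 1" for x y :: real
      using mult_le_one[OF V1a[of x] _ V1a[of y]] by simp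
    have pe: "p_ab h a b = NN (h a) (h b) t / ((sin t)\<^sup>2 * ((sin (h a))\<^sup>2 * (sin (h b))\<^sup>2))" for h
      unfolding p_ab_def NN_def t_def by (simp add: mult.assoc)
    have qe: "q_ab h a b = NN (h a) (h b) t / ((sin t)\<^sup>2 * (sin (h b))\<^sup>2)" if h: "h \<in> E_r r" for h
    proof -
      have "0 < sin (h a)" using sr[OF h, of a] \<open>0 < sin r\<close> by linarith
      thus ?thesis unfolding q_ab_def pe by (simp add: field_simps)
    qed
    note GP = generic_pw[OF r xi t' geo[OF fg(1)] geo[OF fg(2)] dd Vp[OF fg(1)] Vp[OF fg(2)] V1 V1
       V_lip[OF dd]]
    have qlip: "\<bar>(sin (f b))\<^sup>2 - (sin (g b))\<^sup>2\<bar> \<le> 4*d"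
    proof -
      have gen: "\<And>X y d::real. X \<le> 2*y \<Longrightarrow> y \<le> d \<Longrightarrow> 0 \<le> y \<Longrightarrow> X \<le> 4*d" by linarith
      show ?thesis by (rule gen[OF sin_sq_lip[of "f b" "g b"] dd(2) abs_ge_zero])
    qed
    note GQ = generic_pw[OF r xi t' geo[OF fg(1)] geo[OF fg(2)] dd Vq[OF fg(1)] Vq[OF fg(2)] V1a V1a qlip]
    have "\<bar>p_ab f a b\<bar> \<le> C1r r \<and> \<bar>q_ab f a b\<bar> \<le> C1r r \<and>
      \<bar>p_ab f a b - p_ab g a b\<bar> \<le> Kc \<xi> r * sup_dist f g powr \<xi> * Wf \<xi> (b - a) \<and>
      \<bar>q_ab f a b - q_ab g a b\<bar> \<le> Kc \<xi> r * sup_dist f g powr \<xi> * Wf \<xi> (b - a)"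
      using GP GQ unfolding pe qe[OF fg(1)] qe[OF fg(2)] d_def t_def by simp }
  ultimately show "\<bar>p_ab f a b\<bar> \<le> C1r r" "\<bar>q_ab f a b\<bar> \<le> C1r r"
    "\<bar>p_ab f a b - p_ab g a b\<bar> \<le> Kc \<xi> r * sup_dist f g powr \<xi> * Wf \<xi> (b - a)"
    "\<bar>q_ab f a b - q_ab g a b\<bar> \<le> Kc \<xi> r * sup_dist f g powr \<xi> * Wf \<xi> (b - a)" by blast+
qed


definition Jc :: "real \<Rightarrow> real" where "Jc \<xi> = 2 * (pi powr (1-\<xi>) / (1-\<xi>))"

lemma Wf_meas[measurable]: "Wf \<xi> \<in> borel_measurable borel"
  unfolding Wf_def by measurable

lemma Wf_meas_leb: "Wf \<xi> \<in> borel_measurable lebesgue"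
  by (rule measurable_completion) simp

lemma G1:
  assumes "0 < \<xi>" "\<xi> < 1"
  shows "(\<integral>\<^sup>+ t. ennreal (t powr (-\<xi>)) * indicator {0<..<pi} t \<partial>lebesgue) = ennreal (pi powr (1-\<xi>)/(1-\<xi>))"
proof -
  have "((\<lambda>x. x powr (-\<xi>)) has_integral (pi powr (-\<xi>+1) / (-\<xi>+1))) {0..pi}"
    using assms by (intro has_integral_powr_from_0) auto
  moreover have "((\<lambda>x. x powr (-\<xi>)) has_integral I) {0<..<pi} \<longleftrightarrow> ((\<lambda>x. x powr (-\<xi>)) has_integral I) {0..pi}" for I
    using has_integral_open_interval[of "\<lambda>x. x powr (-\<xi>)" I 0 pi] by simp
  ultimately have "((\<lambda>x. x powr (-\<xi>)) has_integral (pi powr (1-\<xi>) / (1-\<xi>))) {0<..<pi}"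
    by simp
  from nn_integral_has_integral_lebesgue'[OF _ this]
  have "(\<integral>\<^sup>+ t. ennreal (t powr (-\<xi>)) * indicator {0<..<pi} t \<partial>lborel) = ennreal (pi powr (1-\<xi>)/(1-\<xi>))"
    by simp
  thus ?thesis by (simp add: nn_integral_completion)
qed

lemma G2:
  assumes "0 < \<xi>" "\<xi> < 1"
  shows "(\<integral>\<^sup>+ t. ennreal ((pi - t) powr (-\<xi>)) * indicator {0<..<pi} t \<partial>lebesgue) = ennreal (pi powr (1-\<xi>)/(1-\<xi>))"
proof -
  have m: "(\<lambda>t. ennreal ((pi - t) powr (-\<xi>)) * indicator {0<..<pi} t) \<in> borel_measurable lebesgue"
    by (rule measurable_completion) simp
  have "(\<integral>\<^sup>+ t. ennreal ((pi - t) powr (-\<xi>)) * indicator {0<..<pi} t \<partial>lebesgue)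
     = ennreal \<bar>-1\<bar> * (\<integral>\<^sup>+ x. ennreal ((pi - (pi + (-1) * x)) powr (-\<xi>)) * indicator {0<..<pi} (pi + (-1) * x) \<partial>lebesgue)"
    by (rule nn_integral_real_affine_lebesgue[OF m]) simp
  also have "\<dots> = (\<integral>\<^sup>+ t. ennreal (t powr (-\<xi>)) * indicator {0<..<pi} t \<partial>lebesgue)"
  proof -
    have "(\<integral>\<^sup>+ x. ennreal ((pi - (pi + (-1) * x)) powr (-\<xi>)) * indicator {0<..<pi} (pi + (-1) * x) \<partial>lebesgue)
      = (\<integral>\<^sup>+ t. ennreal (t powr (-\<xi>)) * indicator {0<..<pi} t \<partial>lebesgue)"
      by (intro nn_integral_cong) (auto simp: indicator_def)
    thus ?thesis by simp
  qed
  finally show ?thesis using G1[OF assms] by simp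
qed

lemma Gtot:
  assumes "0 < \<xi>" "\<xi> < 1"
  shows "(\<integral>\<^sup>+ t. ennreal (Wf \<xi> t) \<partial>lebesgue) = ennreal (Jc \<xi>)"
proof -
  have "(\<integral>\<^sup>+ t. ennreal (Wf \<xi> t) \<partial>lebesgue) =
    (\<integral>\<^sup>+ t. ennreal (t powr (-\<xi>)) * indicator {0<..<pi} t + ennreal ((pi - t) powr (-\<xi>)) * indicator {0<..<pi} t \<partial>lebesgue)"
    by (intro nn_integral_cong) (auto simp: Wf_def indicator_def ennreal_plus)
  also have "\<dots> = (\<integral>\<^sup>+ t. ennreal (t powr (-\<xi>)) * indicator {0<..<pi} t \<partial>lebesgue)
     + (\<integral>\<^sup>+ t. ennreal ((pi - t) powr (-\<xi>)) * indicator {0<..<pi} t \<partial>lebesgue)"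
    by (intro nn_integral_add; rule measurable_completion; simp)
  also have "\<dots> = ennreal (Jc \<xi>)"
  proof -
    have nn: "0 \<le> pi powr (1-\<xi>) / (1-\<xi>)" using assms by simp
    have "ennreal (Jc \<xi>) = ennreal (pi powr (1-\<xi>) / (1-\<xi>)) + ennreal (pi powr (1-\<xi>) / (1-\<xi>))"
      unfolding Jc_def mult_2 using nn by (rule ennreal_plus[OF nn])
    thus ?thesis using G1[OF assms] G2[OF assms] by simp
  qed
  finally show ?thesis .
qed

lemma Wshift:
  assumes "0 < \<xi>" "\<xi> < 1" "0 \<le> c"
  shows "(\<integral>\<^sup>+ b. ennreal (c * Wf \<xi> (b - a)) \<partial>lebesgue) = ennreal (c * Jc \<xi>)"
proof -
  have m: "(\<lambda>b. ennreal (Wf \<xi> (b - a))) \<in> borel_measurable lebesgue"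
    by (rule measurable_completion) simp
  have "(\<integral>\<^sup>+ b. ennreal (c * Wf \<xi> (b - a)) \<partial>lebesgue) = (\<integral>\<^sup>+ b. ennreal c * ennreal (Wf \<xi> (b - a)) \<partial>lebesgue)"
    using assms by (intro nn_integral_cong) (simp add: ennreal_mult Wf_nonneg)
  also have "\<dots> = ennreal c * (\<integral>\<^sup>+ b. ennreal (Wf \<xi> (b - a)) \<partial>lebesgue)"
    by (rule nn_integral_cmult[OF m])
  also have "(\<integral>\<^sup>+ b. ennreal (Wf \<xi> (b - a)) \<partial>lebesgue)
      = ennreal \<bar>1\<bar> * (\<integral>\<^sup>+ x. ennreal (Wf \<xi> ((a + 1 * x) - a)) \<partial>lebesgue)"
    by (rule nn_integral_real_affine_lebesgue[OF m]) simp
  also have "\<dots> = ennreal (Jc \<xi>)" using Gtot[OF assms(1,2)] by simp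
  finally show ?thesis using assms by (simp add: ennreal_mult')
qed


lemma id_leb: "(\<lambda>x::real. x) \<in> borel_measurable lebesgue"
  by (rule measurable_completion) simp
lemma id_ll: "(\<lambda>x::real\<times>real. x) \<in> (lebesgue \<Otimes>\<^sub>M lebesgue) \<rightarrow>\<^sub>M (borel \<Otimes>\<^sub>M borel)"
  by (rule measurable_Pair[OF measurable_compose[OF measurable_fst id_leb] measurable_compose[OF measurable_snd id_leb], simplified])

lemma P_bb:
  fixes f :: "real \<Rightarrow> real"
  assumes [measurable]: "f \<in> borel_measurable borel"
  shows "(\<lambda>x. indicator {fst x..pi} (snd x) * p_ab f (fst x) (snd x)) \<in> borel_measurable (borel \<Otimes>\<^sub>M borel)"
  unfolding p_ab_def indicator_def atLeastAtMost_iff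
  by measurable

lemma gam_comp:
  fixes \<gamma> :: "real \<Rightarrow> real \<times> real"
  assumes "\<gamma> \<in> borel_measurable lebesgue"
  shows "(\<lambda>x. fst (\<gamma> x)) \<in> borel_measurable lebesgue" "(\<lambda>x. snd (\<gamma> x)) \<in> borel_measurable lebesgue"
proof -
  have "(fst :: real\<times>real \<Rightarrow> real) \<in> borel_measurable borel" "(snd :: real\<times>real \<Rightarrow> real) \<in> borel_measurable borel"
    by (intro borel_measurable_continuous_onI continuous_intros)+
  from measurable_compose[OF assms this(1)] measurable_compose[OF assms this(2)]
  show "(\<lambda>x. fst (\<gamma> x)) \<in> borel_measurable lebesgue" "(\<lambda>x. snd (\<gamma> x)) \<in> borel_measurable lebesgue"
    by (simp_all add: o_def)
qed

lemma cross_meas: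
  fixes \<gamma> :: "real \<Rightarrow> real \<times> real"
  assumes "\<gamma> \<in> borel_measurable lebesgue"
  shows "(\<lambda>x. cross2 (\<gamma> (fst x)) (\<gamma> (snd x))) \<in> borel_measurable (lebesgue \<Otimes>\<^sub>M lebesgue)"
proof -
  note g = gam_comp[OF assms]
  show ?thesis unfolding cross2_def
    by (intro borel_measurable_diff borel_measurable_times
        measurable_compose[OF measurable_fst g(1)] measurable_compose[OF measurable_fst g(2)]
        measurable_compose[OF measurable_snd g(1)] measurable_compose[OF measurable_snd g(2)])
qed

lemma sf_leb: "sigma_finite_measure (lebesgue :: real measure)"
proof
  have U: "(\<Union>n::nat. {-real n .. real n}) = UNIV"
  proof (intro set_eqI iffI)
    fix x :: real
    obtain n :: nat where "\<bar>x\<bar> \<le> real n" using real_arch_simple by blast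
    hence "x \<in> {-real n .. real n}" by auto
    thus "x \<in> (\<Union>n::nat. {-real n .. real n})" by blast
  qed auto
  show "\<exists>A::real set set. countable A \<and> A \<subseteq> sets lebesgue \<and> \<Union>A = space lebesgue \<and> (\<forall>a\<in>A. emeasure lebesgue a \<noteq> \<infinity>)"
    by (intro exI[of _ "range (\<lambda>n::nat. {-real n .. real n})"]) (auto simp: U)
qed

lemma Er_borel: "h \<in> E_r r \<Longrightarrow> h \<in> borel_measurable borel"
  by (rule borel_measurable_continuous_onI[OF Er_cont])

lemma P_ll:
  assumes "h \<in> E_r r" "\<gamma> \<in> borel_measurable lebesgue"
  shows "(\<lambda>x. indicator {fst x..pi} (snd x) *\<^sub>R (p_ab h (fst x) (snd x) * cross2 (\<gamma> (fst x)) (\<gamma> (snd x))))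
    \<in> borel_measurable (lebesgue \<Otimes>\<^sub>M lebesgue)"
proof -
  have "(\<lambda>x. indicator {fst x..pi} (snd x) * p_ab h (fst x) (snd x)) \<in> borel_measurable (lebesgue \<Otimes>\<^sub>M lebesgue)"
    using measurable_compose[OF id_ll P_bb[OF Er_borel[OF assms(1)]]] by simp
  from borel_measurable_times[OF this cross_meas[OF assms(2)]]
  show ?thesis by (simp add: mult.assoc)
qed

lemma Q_bb:
  fixes f :: "real \<Rightarrow> real"
  assumes [measurable]: "f \<in> borel_measurable borel"
  shows "(\<lambda>x. q_ab f (fst x) (snd x)) \<in> borel_measurable (borel \<Otimes>\<^sub>M borel)"
  unfolding q_ab_def p_ab_def by measurable

lemma Q_leb:
  assumes "h \<in> E_r r"
  shows "(\<lambda>b. q_ab h a b) \<in> borel_measurable lebesgue"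
proof -
  have "(\<lambda>x. q_ab h (fst x) (snd x)) \<in> borel_measurable (lebesgue \<Otimes>\<^sub>M lebesgue)"
    using measurable_compose[OF id_ll Q_bb[OF Er_borel[OF assms(1)]]] by simp
  from measurable_Pair2[OF this, of a]
  show ?thesis by simp
qed

lemma inner_meas:
  assumes "h \<in> E_r r" "\<gamma> \<in> borel_measurable lebesgue"
  shows "(\<lambda>b. indicator {a..pi} b *\<^sub>R (p_ab h a b * cross2 (\<gamma> a) (\<gamma> b))) \<in> borel_measurable lebesgue"
  using measurable_Pair2[OF P_ll[OF assms], of a] by simp

lemma I_meas:
  assumes "h \<in> E_r r" "\<gamma> \<in> borel_measurable lebesgue"
  shows "(\<lambda>a. LINT b:{a..pi}|lebesgue. p_ab h a b * cross2 (\<gamma> a) (\<gamma> b)) \<in> borel_measurable lebesgue"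
proof -
  have e: "case_prod (\<lambda>a b. indicator {a..pi} b *\<^sub>R (p_ab h a b * cross2 (\<gamma> a) (\<gamma> b)))
    = (\<lambda>x. indicator {fst x..pi} (snd x) *\<^sub>R (p_ab h (fst x) (snd x) * cross2 (\<gamma> (fst x)) (\<gamma> (snd x))))"
    by (rule ext) (simp add: split_beta)
  show ?thesis unfolding set_lebesgue_integral_def
    by (rule sigma_finite_measure.borel_measurable_lebesgue_integral[OF sf_leb]) (unfold e, rule P_ll[OF assms])
qed

lemma cross_le: "\<bar>cross2 v w\<bar> \<le> norm v * norm w"
proof -
  obtain v1 v2 w1 w2 where vw: "v = (v1, v2)" "w = (w1, w2)" by (cases v, cases w) auto
  have "(v1*w2 - v2*w1)\<^sup>2 \<le> (v1\<^sup>2 + v2\<^sup>2) * (w1\<^sup>2 + w2\<^sup>2)"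
  proof -
    have "(v1\<^sup>2 + v2\<^sup>2) * (w1\<^sup>2 + w2\<^sup>2) - (v1*w2 - v2*w1)\<^sup>2 = (v1*w1 + v2*w2)\<^sup>2"
      by (simp add: power2_eq_square algebra_simps)
    thus ?thesis by (metis diff_ge_0_iff_ge zero_le_power2)
  qed
  hence "sqrt ((v1*w2 - v2*w1)\<^sup>2) \<le> sqrt ((v1\<^sup>2 + v2\<^sup>2) * (w1\<^sup>2 + w2\<^sup>2))" by (rule real_sqrt_le_mono)
  thus ?thesis unfolding vw cross2_def by (simp add: norm_Pair real_sqrt_mult)
qed

lemma norm_int_le:
  fixes F :: "'a \<Rightarrow> 'b::{banach, second_countable_topology}"
  assumes "integrable M F" "(\<integral>\<^sup>+ x. ennreal (norm (F x)) \<partial>M) \<le> ennreal B" "0 \<le> B"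
  shows "norm (integral\<^sup>L M F) \<le> B"
  using order_trans[OF integral_norm_bound_ennreal[OF assms(1)] assms(2)] assms(3) by simp

lemma Bap_props:
  assumes "\<gamma> \<in> B_ap"
  shows "\<gamma> \<in> borel_measurable lebesgue" "AE x in lebesgue. norm (\<gamma> x) \<le> 1"
  using assms unfolding B_ap_def by auto

lemma emeasure_leb_Icc: "a \<le> b \<Longrightarrow> emeasure lebesgue {a..b::real} = ennreal (b - a)"
  by simp


lemma ind_meas: "(\<lambda>b. indicator {a..c::real} b :: real) \<in> borel_measurable lebesgue"
  by (intro borel_measurable_indicator) simp

lemma ind_int: "integrable lebesgue (\<lambda>b. indicator {a..c::real} b * (k::real))"
  by (intro integrable_mult_left integrable_real_indicator) (auto simp: emeasure_lborel_Icc_eq)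

lemma emeas_le: "0 \<le> a \<Longrightarrow> emeasure lebesgue {a..pi} \<le> ennreal pi"
  by (simp add: emeasure_lborel_Icc_eq)

lemma nn_const_ind: "0 \<le> a \<Longrightarrow> 0 \<le> k \<Longrightarrow> (\<integral>\<^sup>+ b. ennreal k * indicator {a..pi} b \<partial>lebesgue) \<le> ennreal (k * pi)"
proof -
  assume a: "0 \<le> a" "0 \<le> k"
  have "(\<integral>\<^sup>+ b. ennreal k * indicator {a..pi} b \<partial>lebesgue) = ennreal k * emeasure lebesgue {a..pi}"
    by (rule nn_integral_cmult_indicator) simp
  also have "\<dots> \<le> ennreal k * ennreal pi" by (intro mult_left_mono emeas_le a) simp
  finally show ?thesis using a by (simp add: ennreal_mult)
qed

context
  fixes r \<xi> :: real
  assumes r: "0 < r" "r < pi/2" and xi: "0 < \<xi>" "\<xi> < 1"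
begin

lemma C1_nonneg: "0 \<le> C1r r"
proof -
  have "0 < sin r" using r by (intro sin_gt_zero) auto
  thus ?thesis unfolding C1r_def v0r_def by simp
qed

lemma inner_int:
  assumes h: "h \<in> E_r r" and g: "\<gamma> \<in> B_ap" and a: "0 \<le> a"
  shows "integrable lebesgue (\<lambda>b. indicator {a..pi} b *\<^sub>R (p_ab h a b * cross2 (\<gamma> a) (\<gamma> b)))"
proof (rule Bochner_Integration.integrable_bound[OF ind_int[of a pi "C1r r * norm (\<gamma> a)"] inner_meas[OF h Bap_props(1)[OF g]]])
  show "AE b in lebesgue. norm (indicator {a..pi} b *\<^sub>R (p_ab h a b * cross2 (\<gamma> a) (\<gamma> b)))
      \<le> norm (indicator {a..pi} b * (C1r r * norm (\<gamma> a)))"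
    using Bap_props(2)[OF g]
  proof eventually_elim
    case (elim b)
    show ?case
    proof (cases "b \<in> {a..pi}")
      case True
      have pb: "\<bar>p_ab h a b\<bar> \<le> C1r r" using pw_fg(1)[OF r xi h h] True a by auto
      have "\<bar>p_ab h a b * cross2 (\<gamma> a) (\<gamma> b)\<bar> \<le> C1r r * (norm (\<gamma> a) * 1)"
        unfolding abs_mult
        by (intro mult_mono order_trans[OF cross_le] mult_left_mono elim) (auto simp: pb C1_nonneg)
      then show ?thesis using True C1_nonneg by simp
    qed simp
  qed
qed


abbreviation II :: "(real \<Rightarrow> real) \<Rightarrow> (real \<Rightarrow> real \<times> real) \<Rightarrow> real \<Rightarrow> real" where
  "II h \<gamma> a \<equiv> LINT b:{a..pi}|lebesgue. p_ab h a b * cross2 (\<gamma> a) (\<gamma> b)"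

lemma inner_abs:
  assumes h: "h \<in> E_r r" and g: "\<gamma> \<in> B_ap" and a: "0 \<le> a" and ga: "norm (\<gamma> a) \<le> 1"
  shows "\<bar>II h \<gamma> a\<bar> \<le> C1r r * pi"
proof -
  have "norm (II h \<gamma> a) \<le> C1r r * pi"
    unfolding set_lebesgue_integral_def
  proof (rule norm_int_le[OF inner_int[OF h g a]])
    show "0 \<le> C1r r * pi" using C1_nonneg by simp
    have "(\<integral>\<^sup>+ b. ennreal (norm (indicator {a..pi} b *\<^sub>R (p_ab h a b * cross2 (\<gamma> a) (\<gamma> b)))) \<partial>lebesgue)
       \<le> (\<integral>\<^sup>+ b. ennreal (C1r r) * indicator {a..pi} b \<partial>lebesgue)"
      using Bap_props(2)[OF g]
    proof (intro nn_integral_mono_AE, eventually_elim)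
      case (elim b)
      show ?case
      proof (cases "b \<in> {a..pi}")
        case True
        have pb: "\<bar>p_ab h a b\<bar> \<le> C1r r" using pw_fg(1)[OF r xi h h] True a by auto
        have "\<bar>p_ab h a b * cross2 (\<gamma> a) (\<gamma> b)\<bar> \<le> C1r r * (1 * 1)"
          unfolding abs_mult
          by (intro mult_mono order_trans[OF cross_le] elim ga) (auto simp: pb C1_nonneg)
        then show ?thesis using True by simp
      qed simp
    qed
    also have "\<dots> \<le> ennreal (C1r r * pi)" by (rule nn_const_ind[OF a C1_nonneg])
    finally show "(\<integral>\<^sup>+ b. ennreal (norm (indicator {a..pi} b *\<^sub>R (p_ab h a b * cross2 (\<gamma> a) (\<gamma> b)))) \<partial>lebesgue) \<le> ennreal (C1r r * pi)" .
  qed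
  thus ?thesis by simp
qed

lemma outer_int:
  assumes h: "h \<in> E_r r" and g: "\<gamma> \<in> B_ap"
  shows "integrable lebesgue (\<lambda>a. indicator {0..pi} a *\<^sub>R II h \<gamma> a)"
proof (rule Bochner_Integration.integrable_bound[OF ind_int[of 0 pi "C1r r * pi"]])
  show "(\<lambda>a. indicator {0..pi} a *\<^sub>R II h \<gamma> a) \<in> borel_measurable lebesgue"
    using I_meas[OF h Bap_props(1)[OF g]] ind_meas[of 0 pi] by (intro borel_measurable_scaleR) auto
  show "AE a in lebesgue. norm (indicator {0..pi} a *\<^sub>R II h \<gamma> a) \<le> norm (indicator {0..pi} a * (C1r r * pi))"
    using Bap_props(2)[OF g]
  proof eventually_elim
    case (elim a)
    show ?case
    proof (cases "a \<in> {0..pi}")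
      case True
      then show ?thesis using inner_abs[OF h g _ elim] C1_nonneg by auto
    qed simp
  qed
qed

lemma omega_eq: "omega h \<gamma> = integral\<^sup>L lebesgue (\<lambda>a. indicator {0..pi} a *\<^sub>R II h \<gamma> a)"
  unfolding omega_def by (simp add: set_lebesgue_integral_def)

lemma omega_abs:
  assumes h: "h \<in> E_r r" and g: "\<gamma> \<in> B_ap"
  shows "\<bar>omega h \<gamma>\<bar> \<le> C1r r * pi * pi"
proof -
  have "norm (omega h \<gamma>) \<le> C1r r * pi * pi"
    unfolding omega_eq
  proof (rule norm_int_le[OF outer_int[OF h g]])
    show "0 \<le> C1r r * pi * pi" using C1_nonneg by simp
    have "(\<integral>\<^sup>+ a. ennreal (norm (indicator {0..pi} a *\<^sub>R II h \<gamma> a)) \<partial>lebesgue)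
       \<le> (\<integral>\<^sup>+ a. ennreal (C1r r * pi) * indicator {0..pi} a \<partial>lebesgue)"
      using Bap_props(2)[OF g]
    proof (intro nn_integral_mono_AE, eventually_elim)
      case (elim a)
      show ?case
      proof (cases "a \<in> {0..pi}")
        case True
        then show ?thesis using inner_abs[OF h g _ \<open>norm (\<gamma> a) \<le> 1\<close>] by auto
      qed simp
    qed
    also have "\<dots> \<le> ennreal (C1r r * pi * pi)" by (rule nn_const_ind) (use C1_nonneg in auto)
    finally show "(\<integral>\<^sup>+ a. ennreal (norm (indicator {0..pi} a *\<^sub>R II h \<gamma> a)) \<partial>lebesgue) \<le> ennreal (C1r r * pi * pi)" .
  qed
  thus ?thesis by simp
qed


lemma inner_diff:
  assumes f: "f \<in> E_r r" and g: "g \<in> E_r r" and gm: "\<gamma> \<in> B_ap" and a: "0 \<le> a" and ga: "norm (\<gamma> a) \<le> 1"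
  shows "\<bar>II f \<gamma> a - II g \<gamma> a\<bar> \<le> Kc \<xi> r * sup_dist f g powr \<xi> * Jc \<xi>"
proof -
  define D where "D = Kc \<xi> r * sup_dist f g powr \<xi>"
  have D0: "0 \<le> D" unfolding D_def Kc_def by simp
  have J0: "0 \<le> Jc \<xi>" unfolding Jc_def using xi by simp
  note intf = inner_int[OF f gm a] and intg = inner_int[OF g gm a]
  have "II f \<gamma> a - II g \<gamma> a = integral\<^sup>L lebesgue (\<lambda>b. indicator {a..pi} b *\<^sub>R (p_ab f a b * cross2 (\<gamma> a) (\<gamma> b))
      - indicator {a..pi} b *\<^sub>R (p_ab g a b * cross2 (\<gamma> a) (\<gamma> b)))"
    unfolding set_lebesgue_integral_def by (rule Bochner_Integration.integral_diff[OF intf intg, symmetric])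
  also have "norm \<dots> \<le> D * Jc \<xi>"
  proof (rule norm_int_le[OF Bochner_Integration.integrable_diff[OF intf intg]])
    show "0 \<le> D * Jc \<xi>" using D0 J0 by simp
    have "(\<integral>\<^sup>+ b. ennreal (norm (indicator {a..pi} b *\<^sub>R (p_ab f a b * cross2 (\<gamma> a) (\<gamma> b))
      - indicator {a..pi} b *\<^sub>R (p_ab g a b * cross2 (\<gamma> a) (\<gamma> b)))) \<partial>lebesgue)
      \<le> (\<integral>\<^sup>+ b. ennreal (D * Wf \<xi> (b - a)) \<partial>lebesgue)"
      using Bap_props(2)[OF gm]
    proof (intro nn_integral_mono_AE, eventually_elim)
      case (elim b)
      show ?case
      proof (cases "b \<in> {a..pi}")
        case True
        have pb: "\<bar>p_ab f a b - p_ab g a b\<bar> \<le> D * Wf \<xi> (b - a)"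
          using pw_fg(3)[OF r xi f g] True a by (auto simp: D_def)
        have "\<bar>p_ab f a b * cross2 (\<gamma> a) (\<gamma> b) - p_ab g a b * cross2 (\<gamma> a) (\<gamma> b)\<bar>
            = \<bar>p_ab f a b - p_ab g a b\<bar> * \<bar>cross2 (\<gamma> a) (\<gamma> b)\<bar>"
          by (simp add: abs_mult[symmetric] algebra_simps)
        also have "\<dots> \<le> (D * Wf \<xi> (b - a)) * (1 * 1)"
          by (intro mult_mono order_trans[OF cross_le] pb ga \<open>norm (\<gamma> b) \<le> 1\<close>) (auto intro!: mult_nonneg_nonneg simp: D0 Wf_nonneg)
        finally show ?thesis using True mult_nonneg_nonneg[OF D0 Wf_nonneg[of \<xi> "b - a"]] by simp
      qed (simp add: D0 Wf_nonneg mult_nonneg_nonneg)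
    qed
    also have "\<dots> = ennreal (D * Jc \<xi>)" by (rule Wshift[OF xi D0])
    finally show "(\<integral>\<^sup>+ b. ennreal (norm (indicator {a..pi} b *\<^sub>R (p_ab f a b * cross2 (\<gamma> a) (\<gamma> b))
      - indicator {a..pi} b *\<^sub>R (p_ab g a b * cross2 (\<gamma> a) (\<gamma> b)))) \<partial>lebesgue) \<le> ennreal (D * Jc \<xi>)" .
  qed
  finally show ?thesis by (simp add: D_def)
qed

lemma omega_diff:
  assumes f: "f \<in> E_r r" and g: "g \<in> E_r r" and gm: "\<gamma> \<in> B_ap"
  shows "\<bar>omega f \<gamma> - omega g \<gamma>\<bar> \<le> Kc \<xi> r * sup_dist f g powr \<xi> * Jc \<xi> * pi"
proof -
  define E where "E = Kc \<xi> r * sup_dist f g powr \<xi> * Jc \<xi>"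
  have E0: "0 \<le> E" unfolding E_def Kc_def Jc_def using xi by simp
  note intf = outer_int[OF f gm] and intg = outer_int[OF g gm]
  have "omega f \<gamma> - omega g \<gamma> = integral\<^sup>L lebesgue (\<lambda>a. indicator {0..pi} a *\<^sub>R II f \<gamma> a - indicator {0..pi} a *\<^sub>R II g \<gamma> a)"
    unfolding omega_eq by (rule Bochner_Integration.integral_diff[OF intf intg, symmetric])
  also have "norm \<dots> \<le> E * pi"
  proof (rule norm_int_le[OF Bochner_Integration.integrable_diff[OF intf intg]])
    show "0 \<le> E * pi" using E0 by simp
    have "(\<integral>\<^sup>+ a. ennreal (norm (indicator {0..pi} a *\<^sub>R II f \<gamma> a - indicator {0..pi} a *\<^sub>R II g \<gamma> a)) \<partial>lebesgue)
       \<le> (\<integral>\<^sup>+ a. ennreal E * indicator {0..pi} a \<partial>lebesgue)"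
      using Bap_props(2)[OF gm]
    proof (intro nn_integral_mono_AE, eventually_elim)
      case (elim a)
      show ?case
      proof (cases "a \<in> {0..pi}")
        case True
        then show ?thesis using inner_diff[OF f g gm _ \<open>norm (\<gamma> a) \<le> 1\<close>] by (auto simp: E_def)
      qed simp
    qed
    also have "\<dots> \<le> ennreal (E * pi)" by (rule nn_const_ind) (use E0 in auto)
    finally show "(\<integral>\<^sup>+ a. ennreal (norm (indicator {0..pi} a *\<^sub>R II f \<gamma> a - indicator {0..pi} a *\<^sub>R II g \<gamma> a)) \<partial>lebesgue) \<le> ennreal (E * pi)" .
  qed
  finally show ?thesis by (simp add: E_def)
qed

lemma first_bound:
  assumes f: "f \<in> E_r r" and g: "g \<in> E_r r"
  shows "(\<integral>\<^sup>+ a\<in>{0..pi}. (\<integral>\<^sup>+ b\<in>{a..pi}. ennreal \<bar>p_ab f a b - p_ab g a b\<bar> \<partial>lebesgue) \<partial>lebesgue)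
     \<le> ennreal (Kc \<xi> r * sup_dist f g powr \<xi> * Jc \<xi> * pi)"
proof -
  define D where "D = Kc \<xi> r * sup_dist f g powr \<xi>"
  have D0: "0 \<le> D" unfolding D_def Kc_def by simp
  have J0: "0 \<le> Jc \<xi>" unfolding Jc_def using xi by simp
  have "(\<integral>\<^sup>+ a\<in>{0..pi}. (\<integral>\<^sup>+ b\<in>{a..pi}. ennreal \<bar>p_ab f a b - p_ab g a b\<bar> \<partial>lebesgue) \<partial>lebesgue)
     \<le> (\<integral>\<^sup>+ a. ennreal (D * Jc \<xi>) * indicator {0..pi} a \<partial>lebesgue)"
  proof (intro nn_integral_mono)
    fix a
    show "(\<integral>\<^sup>+ b\<in>{a..pi}. ennreal \<bar>p_ab f a b - p_ab g a b\<bar> \<partial>lebesgue) * indicator {0..pi} a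
        \<le> ennreal (D * Jc \<xi>) * indicator {0..pi} a"
    proof (cases "a \<in> {0..pi}")
      case True
      have "(\<integral>\<^sup>+ b\<in>{a..pi}. ennreal \<bar>p_ab f a b - p_ab g a b\<bar> \<partial>lebesgue) \<le> (\<integral>\<^sup>+ b. ennreal (D * Wf \<xi> (b - a)) \<partial>lebesgue)"
      proof (intro nn_integral_mono)
        fix b
        show "ennreal \<bar>p_ab f a b - p_ab g a b\<bar> * indicator {a..pi} b \<le> ennreal (D * Wf \<xi> (b - a))"
        proof (cases "b \<in> {a..pi}")
          case True
          have "\<bar>p_ab f a b - p_ab g a b\<bar> \<le> D * Wf \<xi> (b - a)"
            using pw_fg(3)[OF r xi f g] True \<open>a \<in> {0..pi}\<close> by (auto simp: D_def)
          then show ?thesis using True by (simp add: ennreal_leI)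
        qed simp
      qed
      also have "\<dots> = ennreal (D * Jc \<xi>)" by (rule Wshift[OF xi D0])
      finally show ?thesis using True by simp
    qed simp
  qed
  also have "\<dots> \<le> ennreal (D * Jc \<xi> * pi)" by (rule nn_const_ind) (use D0 J0 in auto)
  finally show ?thesis by (simp add: D_def)
qed

lemma mu_diff:
  assumes f: "f \<in> E_r r" and g: "g \<in> E_r r" and gm: "\<gamma> \<in> B_ap"
  shows "norm (mu f \<gamma> a - mu g \<gamma> a) \<le> Kc \<xi> r * sup_dist f g powr \<xi> * Jc \<xi>"
proof -
  define D where "D = Kc \<xi> r * sup_dist f g powr \<xi>"
  have D0: "0 \<le> D" unfolding D_def Kc_def by simp
  have J0: "0 \<le> Jc \<xi>" unfolding Jc_def using xi by simp
  have intq: "integrable lebesgue (\<lambda>b. indicator {a..a+pi} b *\<^sub>R (q_ab h a b *\<^sub>R \<gamma> b))" if h: "h \<in> E_r r" for h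
  proof (rule Bochner_Integration.integrable_bound[OF ind_int[of a "a+pi" "C1r r"]])
    show "(\<lambda>b. indicator {a..a+pi} b *\<^sub>R (q_ab h a b *\<^sub>R \<gamma> b)) \<in> borel_measurable lebesgue"
      using ind_meas Q_leb[OF h] Bap_props(1)[OF gm] by (intro borel_measurable_scaleR) auto
    show "AE b in lebesgue. norm (indicator {a..a+pi} b *\<^sub>R (q_ab h a b *\<^sub>R \<gamma> b)) \<le> norm (indicator {a..a+pi} b * C1r r)"
      using Bap_props(2)[OF gm]
    proof eventually_elim
      case (elim b)
      show ?case
      proof (cases "b \<in> {a..a+pi}")
        case True
        have "\<bar>q_ab h a b\<bar> * norm (\<gamma> b) \<le> C1r r * 1"
          using pw_fg(2)[OF r xi h h] True elim by (intro mult_mono) (auto simp: C1_nonneg)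
        then show ?thesis using True C1_nonneg by simp
      qed simp
    qed
  qed
  note intf = intq[OF f] and intg = intq[OF g]
  have "mu f \<gamma> a - mu g \<gamma> a = integral\<^sup>L lebesgue (\<lambda>b. indicator {a..a+pi} b *\<^sub>R (q_ab f a b *\<^sub>R \<gamma> b)
      - indicator {a..a+pi} b *\<^sub>R (q_ab g a b *\<^sub>R \<gamma> b))"
    unfolding mu_def set_lebesgue_integral_def by (rule Bochner_Integration.integral_diff[OF intf intg, symmetric])
  also have "norm \<dots> \<le> D * Jc \<xi>"
  proof (rule norm_int_le[OF Bochner_Integration.integrable_diff[OF intf intg]])
    show "0 \<le> D * Jc \<xi>" using D0 J0 by simp
    have "(\<integral>\<^sup>+ b. ennreal (norm (indicator {a..a+pi} b *\<^sub>R (q_ab f a b *\<^sub>R \<gamma> b)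
      - indicator {a..a+pi} b *\<^sub>R (q_ab g a b *\<^sub>R \<gamma> b))) \<partial>lebesgue)
      \<le> (\<integral>\<^sup>+ b. ennreal (D * Wf \<xi> (b - a)) \<partial>lebesgue)"
      using Bap_props(2)[OF gm]
    proof (intro nn_integral_mono_AE, eventually_elim)
      case (elim b)
      show ?case
      proof (cases "b \<in> {a..a+pi}")
        case True
        have pb: "\<bar>q_ab f a b - q_ab g a b\<bar> \<le> D * Wf \<xi> (b - a)"
          using pw_fg(4)[OF r xi f g] True by (auto simp: D_def)
        have "norm (q_ab f a b *\<^sub>R \<gamma> b - q_ab g a b *\<^sub>R \<gamma> b) = \<bar>q_ab f a b - q_ab g a b\<bar> * norm (\<gamma> b)"
          by (simp add: scaleR_diff_left[symmetric])
        also have "\<dots> \<le> (D * Wf \<xi> (b - a)) * 1"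
          by (intro mult_mono pb \<open>norm (\<gamma> b) \<le> 1\<close>) (auto intro!: mult_nonneg_nonneg simp: D0 Wf_nonneg)
        finally show ?thesis using True mult_nonneg_nonneg[OF D0 Wf_nonneg[of \<xi> "b - a"]] by simp
      qed (simp add: D0 Wf_nonneg mult_nonneg_nonneg)
    qed
    also have "\<dots> = ennreal (D * Jc \<xi>)" by (rule Wshift[OF xi D0])
    finally show "(\<integral>\<^sup>+ b. ennreal (norm (indicator {a..a+pi} b *\<^sub>R (q_ab f a b *\<^sub>R \<gamma> b)
      - indicator {a..a+pi} b *\<^sub>R (q_ab g a b *\<^sub>R \<gamma> b))) \<partial>lebesgue) \<le> ennreal (D * Jc \<xi>)" .
  qed
  finally show ?thesis by (simp add: D_def)
qed

end

theorem lemma4p8: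
  fixes \<xi> r :: real
  assumes "0 < \<xi>" "\<xi> < 1" "0 < r" "r < pi / 2"
  shows "\<exists>H>0. \<forall>\<gamma>\<in>B_ap. \<forall>f\<in>E_r r. \<forall>g\<in>E_r r.
     (\<integral>\<^sup>+ a\<in>{0..pi}. (\<integral>\<^sup>+ b\<in>{a..pi}. ennreal \<bar>p_ab f a b - p_ab g a b\<bar> \<partial>lebesgue) \<partial>lebesgue)
        \<le> ennreal (H * sup_dist f g powr \<xi>)
   \<and> \<bar>omega f \<gamma> - omega g \<gamma>\<bar> \<le> H * sup_dist f g powr \<xi>
   \<and> \<bar>omega_ir f - omega_ir g\<bar> \<le> H * sup_dist f g powr \<xi>
   \<and> (\<forall>a. norm (mu f \<gamma> a - mu g \<gamma> a) \<le> H * sup_dist f g powr \<xi>)"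
proof -
  note ctx = assms(3,4,1,2)
  define K where "K = Kc \<xi> r"
  define J where "J = Jc \<xi>"
  define H where "H = (pi + 1) * (K * J + 1)"
  have K0: "0 \<le> K" unfolding K_def Kc_def by simp
  have J0: "0 \<le> J" unfolding J_def Jc_def using assms by simp
  have KJ0: "0 \<le> K * J" using K0 J0 by simp
  have H0: "0 < H" unfolding H_def using KJ0 pi_gt_zero by (intro mult_pos_pos) linarith+
  have key1: "K * d * J * pi \<le> H * d" if d: "0 \<le> d" for d
  proof -
    have "(pi+1)*(K*J+1) = K*J*pi + (K*J + pi + 1)" by (simp add: algebra_simps)
    hence "K * J * pi \<le> H" unfolding H_def using KJ0 pi_gt_zero by linarith
    hence "(K * J * pi) * d \<le> H * d" using d by (intro mult_right_mono)
    thus ?thesis by (simp add: algebra_simps)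
  qed
  have key2: "K * d * J \<le> H * d" if d: "0 \<le> d" for d
  proof -
    have "(pi+1)*(K*J+1) = K*J + (pi*(K*J) + pi + 1)" by (simp add: algebra_simps)
    moreover have "0 \<le> pi*(K*J)" using KJ0 by simp
    ultimately have "K * J \<le> H" unfolding H_def using KJ0 pi_gt_zero by linarith
    hence "(K * J) * d \<le> H * d" using d by (intro mult_right_mono)
    thus ?thesis by (simp add: algebra_simps)
  qed
  have zero: "(\<lambda>_. 0) \<in> B_ap" unfolding B_ap_def by simp
  have bdd: "bdd_above ((\<lambda>\<gamma>. omega h \<gamma>) ` B_ap)" if h: "h \<in> E_r r" for h
  proof (rule bdd_aboveI2)
    fix \<gamma> assume "\<gamma> \<in> B_ap"
    from omega_abs[OF ctx h this] show "omega h \<gamma> \<le> C1r r * pi * pi" by simp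
  qed
  show ?thesis
  proof (intro exI[of _ H] conjI H0 ballI allI)
    fix \<gamma> f g assume gm: "\<gamma> \<in> B_ap" and f: "f \<in> E_r r" and g: "g \<in> E_r r"
    define d where "d = sup_dist f g powr \<xi>"
    have d0: "0 \<le> d" unfolding d_def by simp
    have "(\<integral>\<^sup>+ a\<in>{0..pi}. (\<integral>\<^sup>+ b\<in>{a..pi}. ennreal \<bar>p_ab f a b - p_ab g a b\<bar> \<partial>lebesgue) \<partial>lebesgue)
        \<le> ennreal (K * d * J * pi)" using first_bound[OF ctx f g] by (simp add: K_def J_def d_def)
    also have "\<dots> \<le> ennreal (H * d)" using key1[OF d0] by (rule ennreal_leI)
    finally show "(\<integral>\<^sup>+ a\<in>{0..pi}. (\<integral>\<^sup>+ b\<in>{a..pi}. ennreal \<bar>p_ab f a b - p_ab g a b\<bar> \<partial>lebesgue) \<partial>lebesgue)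
        \<le> ennreal (H * sup_dist f g powr \<xi>)" by (simp add: d_def)
    have od: "\<bar>omega f \<gamma>' - omega g \<gamma>'\<bar> \<le> K * d * J * pi" if "\<gamma>' \<in> B_ap" for \<gamma>'
      using omega_diff[OF ctx f g that] by (simp add: K_def J_def d_def)
    show "\<bar>omega f \<gamma> - omega g \<gamma>\<bar> \<le> H * sup_dist f g powr \<xi>"
      using od[OF gm] key1[OF d0] by (simp add: d_def)
    define E where "E = K * d * J * pi"
    have "omega_ir f \<le> omega_ir g + E" unfolding omega_ir_def
    proof (rule cSUP_least)
      show "B_ap \<noteq> {}" using zero by blast
      fix \<gamma>' assume g': "\<gamma>' \<in> B_ap"
      have "omega f \<gamma>' \<le> omega g \<gamma>' + E" using od[OF g'] by (simp add: E_def abs_le_iff)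
      also have "omega g \<gamma>' \<le> (SUP \<gamma>\<in>B_ap. omega g \<gamma>)" by (rule cSUP_upper[OF g' bdd[OF g]])
      finally show "omega f \<gamma>' \<le> (SUP \<gamma>\<in>B_ap. omega g \<gamma>) + E" by simp
    qed
    moreover have "omega_ir g \<le> omega_ir f + E" unfolding omega_ir_def
    proof (rule cSUP_least)
      show "B_ap \<noteq> {}" using zero by blast
      fix \<gamma>' assume g': "\<gamma>' \<in> B_ap"
      have "omega g \<gamma>' \<le> omega f \<gamma>' + E" using od[OF g'] by (simp add: E_def abs_le_iff)
      also have "omega f \<gamma>' \<le> (SUP \<gamma>\<in>B_ap. omega f \<gamma>)" by (rule cSUP_upper[OF g' bdd[OF f]])
      finally show "omega g \<gamma>' \<le> (SUP \<gamma>\<in>B_ap. omega f \<gamma>) + E" by simp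
    qed
    ultimately have "\<bar>omega_ir f - omega_ir g\<bar> \<le> E" by linarith
    thus "\<bar>omega_ir f - omega_ir g\<bar> \<le> H * sup_dist f g powr \<xi>"
      using key1[OF d0] by (simp add: E_def d_def)
    fix a
    show "norm (mu f \<gamma> a - mu g \<gamma> a) \<le> H * sup_dist f g powr \<xi>"
      using mu_diff[OF ctx f g gm, of a] key2[OF d0] by (simp add: K_def J_def d_def)
  qed
qed


end
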